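(* Let $T\in(0,\infty]$, let $f\in C([0,T)\times\bar U_K)$ be tilted (i.e. for every $t$, and all $x,y\in\bar U_K$ with $y-x\in\bar U_K^*$, one has $f(t,x)\le f(t,y)$), let $(t,x)\in(0,T)\times\partial U_K$, and let $\phi\in C^\infty((0,T)\times\bar U_K)$ be such that $(t,x)$ is a local maximum of $f-\phi$. Then \[ \inf_{\nu\in\mathbf n(x)}\nu\cdot\nabla\phi(t,x)\le0. \]
   Context: Fix integers $D,K\ge1$. Either $\mathcal C=(0,\infty)^D$, $\bar{\mathcal C}=\mathbb{R}_+^D$, $\mathcal E=\mathbb{R}^D$ with the Euclidean inner product, or $\mathcal C=S^D_{++}$ (positive definite symmetric $D\times D$ matrices), $\bar{\mathcal C}=S^D_+$ (positive semidefinite), $\mathcal E=S^D$ with $a\cdot b=\mathrm{tr}(a^*b)$; $|a|=(a\cdot a)^{1/2}$ and $x\le y$ means $y-x\in\bar{\mathcal C}$. $U_K=\{x=(x_1,\dots,x_K)\in\mathcal C^K: x_{k+1}-x_k\in\mathcal C\ \forall k\le K-1\}$, $\bar U_K=\{x\in\bar{\mathcal C}^K: x_1\le\dots\le x_K\}$ (its closure), $\partial U_K=\bar U_K\setminus U_K$. On $\mathcal E^K$, $x\cdot y=\sum_k x_k\cdot y_k$, $|x|=(x\cdot x)^{1/2}$, $\bar U_K^*=\{x\in\mathcal E^K: x\cdot v\ge0\ \forall v\in\bar U_K\}$, and for $x\in\partial U_K$, $\mathbf n(x)=\{\nu\in\mathcal E^K:|\nu|=1,\ (y-x)\cdot\nu\le0\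 \forall y\in\bar U_K\}$. $\nabla\phi=(\partial_{x_1}\phi,\dots,\partial_{x_K}\phi)$. *)

theory Defs
  imports "HOL-Analysis.Analysis" "HOL-Library.Extended_Real"
begin

text \<open>Setting 1: E = R^D (type real^'d), C = open positive orthant, Cbar = closed orthant.\<close>
definition orthant_open :: "(real^'d) set" where
  "orthant_open = {x. \<forall>i. 0 < x $ i}"
definition orthant_closed :: "(real^'d) set" where
  "orthant_closed = {x. \<forall>i. 0 \<le> x $ i}"

text \<open>Setting 2: E = S^D, the symmetric D x D matrices inside real^'d^'d, whose inner
  product (sum of entrywise products) is tr(a^T b); C = S^D_{++}, Cbar = S^D_+.\<close>
definition sym_mats :: "(real^'d^'d) set" where
  "sym_mats = {A. transpose A = A}"
definition pd_mats :: "(real^'d^'d) set" where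
  "pd_mats = {A. transpose A = A \<and> (\<forall>v. v \<noteq> 0 \<longrightarrow> 0 < v \<bullet> (A *v v))}"
definition psd_mats :: "(real^'d^'d) set" where
  "psd_mats = {A. transpose A = A \<and> (\<forall>v. 0 \<le> v \<bullet> (A *v v))}"

text \<open>The index set {1..K} is a finite linearly ordered type 'k; K = CARD('k).
  k' is the successor of k iff k < k' with nothing strictly in between.\<close>
definition is_succ :: "'k::linorder \<Rightarrow> 'k \<Rightarrow> bool" where
  "is_succ k k' \<longleftrightarrow> k < k' \<and> \<not> (\<exists>j. k < j \<and> j < k')"

definition powK :: "'e set \<Rightarrow> ('e^'k) set" where
  "powK E = {x. \<forall>k. x $ k \<in> E}"

definition UK :: "('e::real_vector) set \<Rightarrow> ('e^'k::{finite,linorder}) set" where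
  "UK C = {x. (\<forall>k. x $ k \<in> C) \<and> (\<forall>k k'. is_succ k k' \<longrightarrow> x $ k' - x $ k \<in> C)}"

definition UKbar :: "('e::real_vector) set \<Rightarrow> ('e^'k::{finite,linorder}) set" where
  "UKbar Cbar = {x. (\<forall>k. x $ k \<in> Cbar) \<and> (\<forall>k k'. is_succ k k' \<longrightarrow> x $ k' - x $ k \<in> Cbar)}"

definition dual_cone :: "('e::real_inner) set \<Rightarrow> ('e^'k::finite) set \<Rightarrow> ('e^'k) set" where
  "dual_cone E S = {x \<in> powK E. \<forall>v\<in>S. 0 \<le> x \<bullet> v}"

definition normals :: "('e::real_inner) set \<Rightarrow> ('e^'k::finite) set \<Rightarrow> 'e^'k \<Rightarrow> ('e^'k) set" where
  "normals E S x = {\<nu> \<in> powK E. norm \<nu> = 1 \<and> (\<forall>y\<in>S. (y - x) \<bullet> \<nu> \<le> 0)}"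

definition tilted :: "ereal \<Rightarrow> ('v::real_inner) set \<Rightarrow> 'v set \<Rightarrow> (real \<times> 'v \<Rightarrow> real) \<Rightarrow> bool" where
  "tilted T Ubar Ustar f \<longleftrightarrow>
     (\<forall>t x y. 0 \<le> t \<and> ereal t < T \<and> x \<in> Ubar \<and> y \<in> Ubar \<and> y - x \<in> Ustar \<longrightarrow> f (t, x) \<le> f (t, y))"

text \<open>A real-valued f is C^infinity on an open set O iff there is a family F of functions
  containing f such that every member of F is (Frechet) differentiable on O and all its
  directional derivatives x \<mapsto> Dg(x)v again belong to F (i.e. all iterated derivatives exist).\<close>
definition smooth_on :: "'a::real_normed_vector set \<Rightarrow> ('a \<Rightarrow> real) \<Rightarrow> bool" where
  "smooth_on W f \<longleftrightarrow> (\<exists>F. f \<in> F \<and>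
     (\<forall>g\<in>F. \<exists>g'. (\<forall>x\<in>W. (g has_derivative g' x) (at x)) \<and> (\<forall>v. (\<lambda>x. g' x v) \<in> F)))"

text \<open>phi in C^infinity(S) for a (not necessarily open) set S: phi is the restriction of a
  function smooth on an open neighbourhood of S.\<close>
definition smooth_on_set :: "'a::real_normed_vector set \<Rightarrow> ('a \<Rightarrow> real) \<Rightarrow> bool" where
  "smooth_on_set S f \<longleftrightarrow> (\<exists>W. open W \<and> S \<subseteq> W \<and> smooth_on W f)"

definition xgrad :: "(real \<times> 'v \<Rightarrow> real) \<Rightarrow> real \<Rightarrow> 'v::euclidean_space \<Rightarrow> 'v" where
  "xgrad \<phi> t x = (\<Sum>b\<in>Basis. frechet_derivative (\<lambda>y. \<phi> (t, y)) (at x) b *\<^sub>R b)"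

definition dom_closed :: "ereal \<Rightarrow> 'v set \<Rightarrow> (real \<times> 'v) set" where
  "dom_closed T S = {(s, y). 0 \<le> s \<and> ereal s < T \<and> y \<in> S}"
definition dom_open :: "ereal \<Rightarrow> 'v set \<Rightarrow> (real \<times> 'v) set" where
  "dom_open T S = {(s, y). 0 < s \<and> ereal s < T \<and> y \<in> S}"

definition local_max_on :: "('a::metric_space) set \<Rightarrow> ('a \<Rightarrow> real) \<Rightarrow> 'a \<Rightarrow> bool" where
  "local_max_on S g p \<longleftrightarrow> p \<in> S \<and> (\<exists>e>0. \<forall>q\<in>S. dist q p < e \<longrightarrow> g q \<le> g p)"

end

theory Submission
  imports Defs
begin

lemma key_lemma:
  fixes S U :: "'v::euclidean_space set" and x n0 :: 'v and psi :: "'v \<Rightarrow> real"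
  assumes S: "subspace S" "closed S" and US: "U \<subseteq> S"
    and Uc: "closed U" "convex U" and cone: "\<And>u c. u \<in> U \<Longrightarrow> 0 \<le> c \<Longrightarrow> c *\<^sub>R u \<in> U"
    and x: "x \<in> U" and n0: "n0 \<in> S" "norm n0 = 1" "\<forall>y\<in>U. (y - x) \<bullet> n0 \<le> 0"
    and D: "(psi has_derivative L) (at x)"
    and e: "e > 0"
    and loc: "\<And>y. y \<in> U \<Longrightarrow> y - x \<in> S \<Longrightarrow> (\<forall>v\<in>U. 0 \<le> (y - x) \<bullet> v) \<Longrightarrow> norm (y - x) < e \<Longrightarrow> psi x \<le> psi y"
  shows "\<exists>\<nu>\<in>S. norm \<nu> = 1 \<and> (\<forall>y\<in>U. (y - x) \<bullet> \<nu> \<le> 0) \<and> L \<nu> \<le> 0"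
proof (cases "L n0 \<le> 0")
  case True
  then show ?thesis using n0 by blast
next
  case False
  have bl: "bounded_linear L" using D has_derivative_bounded_linear by blast
  then have lin: "linear L" using bounded_linear.linear by blast
  have Une: "U \<noteq> {}" using x by blast
  have U0: "0 \<in> U" using cone[OF x, of 0] by simp
  have x2: "2 *\<^sub>R x \<in> U" using cone[OF x, of 2] by simp
  have n0x: "x \<bullet> n0 = 0"
  proof -
    have "(0 - x) \<bullet> n0 \<le> 0" "(2 *\<^sub>R x - x) \<bullet> n0 \<le> 0" using n0(3) U0 x2 by blast+
    then show ?thesis by (simp add: inner_diff_left algebra_simps)
  qed
  have n0v: "\<forall>v\<in>U. v \<bullet> n0 \<le> 0" using n0(3) n0x by (auto simp: inner_diff_left)
  define a where "a = - n0"
  have aS: "a \<in> S" using n0 S(1) by (simp add: a_def subspace_neg)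
  have na: "norm a = 1" using n0 by (simp add: a_def)
  have La: "L a < 0" using False by (simp add: a_def linear_neg[OF lin])
  have av: "\<forall>v\<in>U. 0 \<le> a \<bullet> v" using n0v by (auto simp: a_def inner_commute)
  define lam where "lam n = inverse (real (Suc n))" for n
  have lam_pos: "lam n > 0" for n by (simp add: lam_def)
  have lam0: "lam \<longlonglongrightarrow> 0" unfolding lam_def by (rule LIMSEQ_inverse_real_of_nat)
  define z where "z n = x + lam n *\<^sub>R a" for n
  define y where "y n = closest_point U (z n)" for n
  define rho where "rho n = (z n - y n) /\<^sub>R lam n" for n
  have yU: "y n \<in> U" for n unfolding y_def using closest_point_in_set[OF Uc(1) Une] .
  have dot: "(z n - y n) \<bullet> (u - y n) \<le> 0" if "u \<in> U" for n u
    unfolding y_def using closest_point_dot[OF Uc(2,1) that] .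
  have ry: "(z n - y n) \<bullet> y n = 0" for n
  proof -
    have "(z n - y n) \<bullet> (0 - y n) \<le> 0" using dot[OF U0] .
    moreover have "(z n - y n) \<bullet> (2 *\<^sub>R y n - y n) \<le> 0" using dot[OF cone[OF yU, of 2]] by simp
    ultimately show ?thesis by (simp add: inner_diff_right algebra_simps)
  qed
  have ru: "(z n - y n) \<bullet> u \<le> 0" if "u \<in> U" for n u
    using dot[OF that, of n] ry[of n] by (simp add: inner_diff_right)
  have ydist: "norm (y n - x) \<le> lam n" for n
  proof -
    have "dist (y n) (closest_point U x) \<le> dist (z n) x"
      using closest_point_lipschitz[OF Uc(2,1) Une, of "z n" x] unfolding y_def .
    then show ?thesis using closest_point_self[OF x] lam_pos[of n] na
      by (simp add: dist_norm z_def)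
  qed
  have rnorm: "norm (z n - y n) \<le> lam n" for n
  proof -
    have "dist (z n) (y n) \<le> dist (z n) x" unfolding y_def using closest_point_le[OF Uc(1) x] .
    then show ?thesis using lam_pos[of n] na by (simp add: dist_norm z_def)
  qed
  have zS: "z n \<in> S" for n using x US aS S(1) by (auto simp: z_def intro: subspace_add subspace_scale)
  have yS: "y n \<in> S" for n using yU US by auto
  have rhoS: "rho n \<in> S" for n using zS yS S(1) by (simp add: rho_def subspace_diff subspace_scale)
  have rho1: "norm (rho n) \<le> 1" for n
    using rnorm[of n] lam_pos[of n] by (simp add: rho_def divide_simps)
  have rhou: "rho n \<bullet> u \<le> 0" if "u \<in> U" for n u
    using ru[OF that, of n] lam_pos[of n] by (simp add: rho_def mult_nonneg_nonpos)
  have rhox: "rho n \<bullet> x \<ge> - lam n" for n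
  proof -
    have "(z n - y n) \<bullet> x = (z n - y n) \<bullet> (x - y n)" using ry[of n] by (simp add: inner_diff_right)
    also have "\<dots> \<ge> - (norm (z n - y n) * norm (x - y n))"
      using Cauchy_Schwarz_ineq2[of "z n - y n" "x - y n"] by linarith
    finally have "(z n - y n) \<bullet> x \<ge> - (norm (z n - y n) * norm (x - y n))" .
    moreover have "norm (z n - y n) * norm (x - y n) \<le> lam n * lam n"
      using mult_mono[OF rnorm[of n] ydist[of n]] lam_pos[of n] by (simp add: norm_minus_commute)
    ultimately have "(z n - y n) \<bullet> x \<ge> - (lam n * lam n)" by linarith
    then show ?thesis using lam_pos[of n] by (simp add: rho_def divide_simps)
  qed
  have ydiff: "y n - x = lam n *\<^sub>R (a - rho n)" for n
    using lam_pos[of n] by (simp add: rho_def z_def algebra_simps)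
  have ylocal: "norm (y n - x) < e \<Longrightarrow> psi x \<le> psi (y n)" for n
  proof (rule loc[OF yU])
    show "y n - x \<in> S" using yS x US S(1) by (auto intro: subspace_diff)
    show "\<forall>v\<in>U. 0 \<le> (y n - x) \<bullet> v"
    proof
      fix v assume v: "v \<in> U"
      have "y n - x = lam n *\<^sub>R a - (z n - y n)" by (simp add: z_def)
      then have "(y n - x) \<bullet> v = (lam n *\<^sub>R a - (z n - y n)) \<bullet> v" by (rule arg_cong)
      also have "\<dots> = lam n * (a \<bullet> v) - (z n - y n) \<bullet> v" by (simp only: inner_diff_left inner_scaleR_left)
      finally have "(y n - x) \<bullet> v = lam n * (a \<bullet> v) - (z n - y n) \<bullet> v" .
      moreover have "0 \<le> lam n * (a \<bullet> v)" using av v lam_pos[of n] by simp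
      ultimately show "0 \<le> (y n - x) \<bullet> v" using ru[OF v, of n] by linarith
    qed
  qed
  define eps where "eps = - L a / 2"
  have eps: "eps > 0" using La by (simp add: eps_def)
  obtain d where d: "d > 0" "\<And>w. norm (w - x) < d \<Longrightarrow> norm (psi w - psi x - L (w - x)) \<le> eps * norm (w - x)"
    using D eps unfolding has_derivative_at_alt by blast
  obtain N where N: "\<And>n. n \<ge> N \<Longrightarrow> lam n < min d e"
    using order_tendstoD(2)[OF lam0, of "min d e"] d e by (auto simp: eventually_sequentially)
  have Lrho: "L (a - rho n) \<ge> - eps" if "n \<ge> N" for n
  proof -
    have yl: "norm (y n - x) < min d e" using N[OF that] ydist[of n] by linarith
    have "psi x \<le> psi (y n)" using ylocal yl by simp
    moreover have "norm (psi (y n) - psi x - L (y n - x)) \<le> eps * norm (y n - x)" using d(2) yl by simp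
    ultimately have "L (y n - x) \<ge> - eps * norm (y n - x)" unfolding real_norm_def by linarith
    moreover have "eps * norm (y n - x) \<le> eps * lam n" using ydist[of n] eps by simp
    moreover have "L (y n - x) = lam n * L (a - rho n)" using ydiff[of n] linear_scale[OF lin] by simp
    ultimately have "lam n * L (a - rho n) \<ge> - (eps * lam n)" by linarith
    moreover have "eps * lam n = lam n * eps" by (rule mult.commute)
    ultimately have "lam n * (- eps) \<le> lam n * L (a - rho n)" by simp
    then show ?thesis using mult_le_cancel_left_pos[OF lam_pos[of n]] by blast
  qed
  have comp: "compact (cball (0::'v) 1 \<inter> S)" using compact_Int_closed[OF compact_cball S(2)] .
  have inK: "\<forall>n. rho n \<in> cball 0 1 \<inter> S" using rhoS rho1 by auto
  obtain l r where l: "l \<in> cball 0 1 \<inter> S" and r: "strict_mono r" and lim: "(rho \<circ> r) \<longlonglongrightarrow> l"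
    using seq_compactE[OF compact_imp_seq_compact[OF comp] inK] by blast
  have lS: "l \<in> S" using l by blast
  have lu: "l \<bullet> u \<le> 0" if "u \<in> U" for u
  proof (rule tendsto_le[OF trivial_limit_sequentially tendsto_const])
    show "(\<lambda>n. (rho \<circ> r) n \<bullet> u) \<longlonglongrightarrow> l \<bullet> u" by (intro tendsto_intros lim)
    show "\<forall>\<^sub>F n in sequentially. (rho \<circ> r) n \<bullet> u \<le> 0" using rhou[OF that] by simp
  qed
  have lx: "l \<bullet> x \<ge> 0"
  proof (rule tendsto_le[OF trivial_limit_sequentially])
    show "(\<lambda>n. (rho \<circ> r) n \<bullet> x) \<longlonglongrightarrow> l \<bullet> x" by (intro tendsto_intros lim)
    have "(lam \<circ> r) \<longlonglongrightarrow> 0" by (rule LIMSEQ_subseq_LIMSEQ[OF lam0 r])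
    from tendsto_minus[OF this] show "(\<lambda>n. - (lam \<circ> r) n) \<longlonglongrightarrow> 0" by simp
    show "\<forall>\<^sub>F n in sequentially. - (lam \<circ> r) n \<le> (rho \<circ> r) n \<bullet> x" using rhox by simp
  qed
  have lx0: "l \<bullet> x = 0" using lu[OF x] lx by linarith
  have Ll: "L (a - l) \<ge> - eps"
  proof (rule tendsto_lowerbound)
    show "(\<lambda>n. L (a - (rho \<circ> r) n)) \<longlonglongrightarrow> L (a - l)"
      by (intro bounded_linear.tendsto[OF bl] tendsto_intros lim)
    show "\<forall>\<^sub>F n in sequentially. - eps \<le> L (a - (rho \<circ> r) n)"
      unfolding eventually_sequentially
    proof (intro exI allI impI)
      fix n assume "N \<le> n"
      then have "N \<le> r n" using seq_suble[OF r, of n] by linarith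
      then show "- eps \<le> L (a - (rho \<circ> r) n)" using Lrho by simp
    qed
  qed simp
  have Lneg: "L l < 0" using Ll La linear_diff[OF lin, of a l] by (simp add: eps_def)
  have lnz: "l \<noteq> 0" using Lneg linear_0[OF lin] by auto
  define \<nu> where "\<nu> = l /\<^sub>R norm l"
  show ?thesis
  proof (intro bexI conjI ballI)
    show "\<nu> \<in> S" using lS S(1) by (simp add: \<nu>_def subspace_scale)
    show "norm \<nu> = 1" using lnz by (simp add: \<nu>_def)
    show "(u - x) \<bullet> \<nu> \<le> 0" if "u \<in> U" for u
    proof -
      have "l \<bullet> (u - x) \<le> 0" using lu[OF that] lx0 by (simp add: inner_diff_right)
      then show ?thesis by (simp add: \<nu>_def inner_commute mult_nonneg_nonpos)
    qed
    show "L \<nu> \<le> 0" using Lneg lnz by (simp add: \<nu>_def linear_scale[OF lin] divide_nonpos_pos mult_nonneg_nonpos)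
  qed
qed

lemma powK_subspace: assumes "subspace E" shows "subspace (powK E :: ('e::real_vector^'k) set)"
  using assms unfolding subspace_def powK_def by auto

lemma powK_closed: assumes "closed E" shows "closed (powK E :: ('e::real_normed_vector^'k) set)"
proof -
  have eq: "powK E = (\<Inter>k. (\<lambda>x. x $ k) -` E)" by (auto simp: powK_def)
  show ?thesis unfolding eq by (rule closed_INT) (simp add: closed_vimage_vec_nth assms)
qed

lemma closed_vimage_diff: assumes "closed Cbar"
  shows "closed ((\<lambda>x::'e::real_normed_vector^'k. x $ k' - x $ k) -` Cbar)"
  by (rule continuous_closed_vimage[OF assms]) (intro continuous_intros)

lemma UKbar_sub: assumes "Cbar \<subseteq> E" shows "UKbar Cbar \<subseteq> (powK E :: ('e::real_vector^'k::{finite,linorder}) set)"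
  using assms unfolding UKbar_def powK_def by auto

lemma UKbar_closed: assumes "closed Cbar"
  shows "closed (UKbar Cbar :: ('e::real_normed_vector^'k::{finite,linorder}) set)"
proof -
  have eq: "UKbar Cbar = (\<Inter>k. (\<lambda>x. x $ k) -` Cbar) \<inter>
      (\<Inter>k. \<Inter>k'. (if is_succ k k' then (\<lambda>x. x $ k' - x $ k) -` Cbar else UNIV))"
    by (auto simp: UKbar_def split: if_splits)
  show ?thesis unfolding eq
    using closed_vimage_vec_nth[OF assms] closed_vimage_diff[OF assms] by (intro closed_Int closed_INT) auto
qed

lemma UKbar_convex: assumes "convex Cbar"
  shows "convex (UKbar Cbar :: ('e::real_vector^'k::{finite,linorder}) set)"
proof (rule convexI)
  fix x y :: "('e, 'k) vec" and u v :: real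
  assume xy: "x \<in> UKbar Cbar" "y \<in> UKbar Cbar" and uv0: "0 \<le> u" "0 \<le> v" "u + v = 1"
  then have uv: "0 \<le> u \<and> 0 \<le> v \<and> u + v = 1" by simp
  have "(u *\<^sub>R x + v *\<^sub>R y) $ k \<in> Cbar" for k
    using xy uv convexD[OF assms, of "x $ k" "y $ k" u v] by (auto simp: UKbar_def)
  moreover have "(u *\<^sub>R x + v *\<^sub>R y) $ k' - (u *\<^sub>R x + v *\<^sub>R y) $ k \<in> Cbar" if "is_succ k k'" for k k'
  proof -
    have "(u *\<^sub>R x + v *\<^sub>R y) $ k' - (u *\<^sub>R x + v *\<^sub>R y) $ k = u *\<^sub>R (x $ k' - x $ k) + v *\<^sub>R (y $ k' - y $ k)"
      by (simp add: algebra_simps)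
    then show ?thesis using xy uv that convexD[OF assms, of "x $ k' - x $ k" "y $ k' - y $ k" u v]
      by (auto simp: UKbar_def)
  qed
  ultimately show "u *\<^sub>R x + v *\<^sub>R y \<in> UKbar Cbar" by (auto simp: UKbar_def)
qed

lemma UKbar_cone: assumes "\<And>u c. u \<in> Cbar \<Longrightarrow> 0 \<le> c \<Longrightarrow> c *\<^sub>R u \<in> Cbar"
  and "x \<in> UKbar Cbar" "0 \<le> c"
  shows "c *\<^sub>R x \<in> (UKbar Cbar :: ('e::real_vector^'k::{finite,linorder}) set)"
proof -
  have "(c *\<^sub>R x) $ k' - (c *\<^sub>R x) $ k = c *\<^sub>R (x $ k' - x $ k)" for k k'
    by (simp add: algebra_simps)
  then show ?thesis using assms unfolding UKbar_def by auto
qed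

lemma normal_exists:
  fixes x :: "'e::euclidean_space^'k::{finite,linorder}"
  assumes sub: "subspace E" and x: "x \<in> UKbar Cbar" "x \<notin> UK C"
    and bd: "\<And>c. c \<in> Cbar \<Longrightarrow> c \<notin> C \<Longrightarrow> \<exists>w\<in>E. w \<noteq> 0 \<and> (\<forall>c'\<in>Cbar. 0 \<le> c' \<bullet> w) \<and> c \<bullet> w = 0"
  shows "\<exists>n0\<in>powK E. norm n0 = 1 \<and> (\<forall>y\<in>UKbar Cbar. (y - x) \<bullet> n0 \<le> 0)"
proof -
  have E0: "0 \<in> E" using sub by (rule subspace_0)
  have "\<exists>n\<in>powK E. n \<noteq> 0 \<and> (\<forall>y\<in>UKbar Cbar. (y - x) \<bullet> n \<le> 0)"
  proof (cases "\<forall>k. x $ k \<in> C")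
    case False
    then obtain k where k: "x $ k \<notin> C" by blast
    have "x $ k \<in> Cbar" using x by (auto simp: UKbar_def)
    then obtain w where w: "w \<in> E" "w \<noteq> 0" "\<forall>c'\<in>Cbar. 0 \<le> c' \<bullet> w" "x $ k \<bullet> w = 0"
      using bd k by blast
    show ?thesis
    proof (intro bexI conjI ballI)
      show "- axis k w \<in> powK E" using w(1) E0 sub by (auto simp: powK_def axis_def subspace_neg)
      show "- axis k w \<noteq> 0" using w(2) by simp
      fix y :: "('e, 'k) vec" assume y: "y \<in> UKbar Cbar"
      then have "y $ k \<in> Cbar" by (auto simp: UKbar_def)
      then show "(y - x) \<bullet> - axis k w \<le> 0" using w by (simp add: inner_axis inner_diff_left)
    qed
  next
    case True
    then obtain k k' where kk: "is_succ k k'" "x $ k' - x $ k \<notin> C" using x by (auto simp: UK_def)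
    have "x $ k' - x $ k \<in> Cbar" using x kk by (auto simp: UKbar_def)
    then obtain w where w: "w \<in> E" "w \<noteq> 0" "\<forall>c'\<in>Cbar. 0 \<le> c' \<bullet> w" "(x $ k' - x $ k) \<bullet> w = 0"
      using bd kk by blast
    have kne: "k \<noteq> k'" using kk(1) by (auto simp: is_succ_def)
    show ?thesis
    proof (intro bexI conjI ballI)
      show "axis k w - axis k' w \<in> powK E" using w(1) E0 sub by (auto simp: powK_def axis_def subspace_neg)
      show "axis k w - axis k' w \<noteq> 0"
      proof
        assume "axis k w - axis k' w = 0"
        then have "(axis k w - axis k' w) $ k = 0" by simp
        then show False using w(2) kne by (simp add: axis_def)
      qed
      fix y :: "('e, 'k) vec" assume y: "y \<in> UKbar Cbar"
      then have "y $ k' - y $ k \<in> Cbar" using kk by (auto simp: UKbar_def)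
      then have "0 \<le> (y $ k' - y $ k) \<bullet> w" using w by blast
      then show "(y - x) \<bullet> (axis k w - axis k' w) \<le> 0" using w(4)
        by (simp add: inner_axis inner_diff_left inner_diff_right algebra_simps)
    qed
  qed
  then obtain n where n: "n \<in> powK E" "n \<noteq> 0" "\<forall>y\<in>UKbar Cbar. (y - x) \<bullet> n \<le> 0" by blast
  show ?thesis
  proof (intro bexI conjI ballI)
    show "n /\<^sub>R norm n \<in> powK E" using subspace_scale[OF powK_subspace[OF sub] n(1), of "inverse (norm n)"] by simp
    show "norm (n /\<^sub>R norm n) = 1" using n(2) by simp
    fix y :: "('e, 'k) vec" assume "y \<in> UKbar Cbar"
    then show "(y - x) \<bullet> (n /\<^sub>R norm n) \<le> 0" using n(3) by (simp add: mult_nonneg_nonpos)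
  qed
qed

lemma generic:
  fixes E C Cbar :: "'e::euclidean_space set"
    and f \<phi> :: "real \<times> ('e, 'k::{finite,linorder}) vec \<Rightarrow> real" and x :: "('e, 'k) vec" and T :: ereal
  assumes sub: "subspace E" and cl: "closed E" and CE: "Cbar \<subseteq> E"
    and Cc: "closed Cbar" "convex Cbar" and Ccone: "\<And>u c. u \<in> Cbar \<Longrightarrow> 0 \<le> c \<Longrightarrow> c *\<^sub>R u \<in> Cbar"
    and bd: "\<And>c. c \<in> Cbar \<Longrightarrow> c \<notin> C \<Longrightarrow> \<exists>w\<in>E. w \<noteq> 0 \<and> (\<forall>c'\<in>Cbar. 0 \<le> c' \<bullet> w) \<and> c \<bullet> w = 0"
    and til: "tilted T (UKbar Cbar) (dual_cone E (UKbar Cbar)) f"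
    and t: "0 < t" "ereal t < T" and x: "x \<in> UKbar Cbar - UK C"
    and sm: "smooth_on_set (dom_open T (UKbar Cbar)) \<phi>"
    and lm: "local_max_on (dom_open T (UKbar Cbar)) (\<lambda>p. f p - \<phi> p) (t, x)"
  shows "(INF \<nu>\<in>normals E (UKbar Cbar) x. ereal (\<nu> \<bullet> xgrad \<phi> t x)) \<le> 0"
proof -
  let ?U = "UKbar Cbar :: ('e, 'k) vec set"
  have xU: "x \<in> ?U" using x by blast
  obtain W where W: "open W" "dom_open T ?U \<subseteq> W" "smooth_on W \<phi>"
    using sm unfolding smooth_on_set_def by blast
  obtain F where F: "\<phi> \<in> F" "\<forall>g\<in>F. \<exists>g'. (\<forall>p\<in>W. (g has_derivative g' p) (at p)) \<and> (\<forall>v. (\<lambda>p. g' p v) \<in> F)"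
    using W(3) unfolding smooth_on_def by blast
  obtain g' where g': "\<forall>p\<in>W. (\<phi> has_derivative g' p) (at p)" using F by blast
  have txd: "(t, x) \<in> dom_open T ?U" using t xU by (simp add: dom_open_def)
  have Dphi: "(\<phi> has_derivative g' (t, x)) (at (t, x))" using g' W(2) txd by blast
  have Dpair: "((\<lambda>y. (t, y)) has_derivative (\<lambda>v. (0, v))) (at x)"
    by (rule has_derivative_Pair[OF has_derivative_const has_derivative_ident])
  define L where "L = (\<lambda>v. g' (t, x) (0, v))"
  have Dpsi: "((\<lambda>y. \<phi> (t, y)) has_derivative L) (at x)"
    using diff_chain_at[OF Dpair, of \<phi> "g' (t, x)"] Dphi by (simp add: o_def L_def)
  have bl: "linear L" using Dpsi has_derivative_bounded_linear bounded_linear.linear by blast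
  obtain e where e: "e > 0" "\<forall>q\<in>dom_open T ?U. dist q (t, x) < e \<longrightarrow> f q - \<phi> q \<le> f (t, x) - \<phi> (t, x)"
    using lm unfolding local_max_on_def by blast
  have loc: "\<phi> (t, x) \<le> \<phi> (t, y)"
    if y: "y \<in> ?U" "y - x \<in> powK E" "\<forall>v\<in>?U. 0 \<le> (y - x) \<bullet> v" "norm (y - x) < e" for y
  proof -
    have "(t, y) \<in> dom_open T ?U" using t y by (simp add: dom_open_def)
    moreover have "dist (t, y) (t, x) < e" using y(4) by (simp add: dist_Pair_Pair dist_norm)
    ultimately have 1: "f (t, y) - \<phi> (t, y) \<le> f (t, x) - \<phi> (t, x)" using e(2) by blast
    have "y - x \<in> dual_cone E ?U" using y by (simp add: dual_cone_def)
    then have 2: "f (t, x) \<le> f (t, y)" using til t xU y(1) unfolding tilted_def by simp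
    show ?thesis using 1 2 by linarith
  qed
  have n0: "\<exists>n0\<in>powK E. norm n0 = 1 \<and> (\<forall>y\<in>?U. (y - x) \<bullet> n0 \<le> 0)"
    using normal_exists[OF sub xU _ bd] x by blast
  then obtain n0 where n0: "n0 \<in> powK E" "norm n0 = 1" "\<forall>y\<in>?U. (y - x) \<bullet> n0 \<le> 0" by blast
  obtain \<nu> where \<nu>: "\<nu> \<in> powK E" "norm \<nu> = 1" "\<forall>y\<in>?U. (y - x) \<bullet> \<nu> \<le> 0" "L \<nu> \<le> 0"
    using key_lemma[OF powK_subspace[OF sub] powK_closed[OF cl] UKbar_sub[OF CE] UKbar_closed[OF Cc(1)]
        UKbar_convex[OF Cc(2)] UKbar_cone[OF Ccone] xU n0 Dpsi e(1) loc] by blast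
  have nuN: "\<nu> \<in> normals E ?U x" using \<nu> by (simp add: normals_def)
  have fd: "frechet_derivative (\<lambda>y. \<phi> (t, y)) (at x) = L" using frechet_derivative_at[OF Dpsi] by simp
  have "\<nu> \<bullet> xgrad \<phi> t x = (\<Sum>b\<in>Basis. L b * (\<nu> \<bullet> b))"
    by (simp add: xgrad_def fd inner_sum_right)
  also have "\<dots> = L (\<Sum>b\<in>Basis. (\<nu> \<bullet> b) *\<^sub>R b)"
    by (simp add: linear_sum[OF bl] linear_scale[OF bl] mult.commute)
  also have "\<dots> = L \<nu>" by (simp add: euclidean_representation)
  finally have "\<nu> \<bullet> xgrad \<phi> t x \<le> 0" using \<nu>(4) by simp
  then show ?thesis by (intro INF_lower2[OF nuN]) simp
qed

lemma orth_closed: "closed (orthant_closed :: (real^'d) set)"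
proof -
  have eq: "(orthant_closed :: (real^'d) set) = (\<Inter>i. (\<lambda>x. x $ i) -` {0..})"
    by (auto simp: orthant_closed_def)
  show ?thesis unfolding eq by (rule closed_INT) (simp add: closed_vimage_vec_nth)
qed

lemma orth_convex: "convex (orthant_closed :: (real^'d) set)"
  by (rule convexI) (auto simp: orthant_closed_def)

lemma orth_cone: "u \<in> orthant_closed \<Longrightarrow> 0 \<le> (c::real) \<Longrightarrow> c *\<^sub>R u \<in> (orthant_closed :: (real^'d) set)"
  by (auto simp: orthant_closed_def)

lemma orth_bd:
  assumes "c \<in> (orthant_closed :: (real^'d) set)" "c \<notin> orthant_open"
  shows "\<exists>w\<in>UNIV. w \<noteq> 0 \<and> (\<forall>c'\<in>orthant_closed. 0 \<le> c' \<bullet> w) \<and> c \<bullet> w = 0"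
proof -
  obtain i where "\<not> 0 < c $ i" using assms(2) by (auto simp: orthant_open_def)
  then have ci: "c $ i = 0" using assms(1) by (auto simp: orthant_closed_def intro: antisym)
  show ?thesis
    by (rule bexI[of _ "axis i 1"]) (auto simp: inner_axis ci orthant_closed_def)
qed

definition outer :: "real^'d \<Rightarrow> real^'d^'d" where
  "outer v = (\<chi> i j. v $ i * v $ j)"

lemma inner_outer: "M \<bullet> outer v = v \<bullet> (M *v v)"
  by (simp add: outer_def inner_vec_def matrix_vector_mult_def sum_distrib_left mult_ac)

lemma sym_eq: "transpose A = A \<longleftrightarrow> (\<forall>i j. A $ i $ j = A $ j $ i)"
  by (auto simp: transpose_def vec_eq_iff)

lemma sym_subspace: "subspace sym_mats"
  unfolding subspace_def sym_mats_def by (auto simp: sym_eq)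

lemma transpose_linear: "linear (transpose :: real^'d^'d \<Rightarrow> real^'d^'d)"
  by (rule linearI) (auto simp: transpose_def vec_eq_iff)

lemma sym_closed: "closed sym_mats"
proof -
  have "continuous_on UNIV (transpose :: real^'d^'d \<Rightarrow> real^'d^'d)"
    using transpose_linear linear_continuous_on linear_conv_bounded_linear by blast
  then show ?thesis unfolding sym_mats_def
    by (intro closed_Collect_eq continuous_on_id) auto
qed

lemma psd_sub: "psd_mats \<subseteq> sym_mats"
  by (auto simp: psd_mats_def sym_mats_def)

lemma psd_alt: "psd_mats = sym_mats \<inter> (\<Inter>v. {A. 0 \<le> A \<bullet> outer v})"
  by (auto simp: psd_mats_def sym_mats_def inner_outer)

lemma psd_closed: "closed psd_mats"
  unfolding psd_alt
  by (intro closed_Int sym_closed closed_INT ballI closed_Collect_le continuous_intros)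

lemma psd_convex: "convex psd_mats"
proof -
  have "convex (sym_mats :: (real^'d^'d) set)" using sym_subspace by (rule subspace_imp_convex)
  moreover have "convex {A :: real^'d^'d. 0 \<le> A \<bullet> outer v}" for v
    by (rule convexI) (auto simp: inner_add_left)
  ultimately show ?thesis unfolding psd_alt by (intro convex_Int convex_INT) auto
qed

lemma psd_cone: "u \<in> psd_mats \<Longrightarrow> 0 \<le> (c::real) \<Longrightarrow> c *\<^sub>R u \<in> (psd_mats :: (real^'d^'d) set)"
  unfolding psd_alt using subspace_scale[OF sym_subspace] by auto

lemma psd_bd:
  assumes "c \<in> (psd_mats :: (real^'d^'d) set)" "c \<notin> pd_mats"
  shows "\<exists>w\<in>sym_mats. w \<noteq> 0 \<and> (\<forall>c'\<in>psd_mats. 0 \<le> c' \<bullet> w) \<and> c \<bullet> w = 0"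
proof -
  obtain v where v: "v \<noteq> 0" "\<not> 0 < v \<bullet> (c *v v)" using assms by (auto simp: psd_mats_def pd_mats_def)
  then have cv: "c \<bullet> outer v = 0" using assms(1) by (auto simp: psd_mats_def inner_outer intro: antisym)
  obtain i where i: "v $ i \<noteq> 0" using v(1) by (auto simp: vec_eq_iff)
  have "outer v \<noteq> 0"
  proof
    assume "outer v = 0"
    then have "outer v $ i $ i = 0" by simp
    then show False using i by (simp add: outer_def)
  qed
  moreover have "outer v \<in> sym_mats" by (simp add: sym_mats_def sym_eq outer_def mult.commute)
  ultimately show ?thesis using cv by (auto simp: psd_mats_def inner_outer)
qed

theorem proposition3p6:
  shows
   "(\<forall>(T::ereal) (f :: real \<times> ((real^'d)^('k::{finite,linorder})) \<Rightarrow> real) \<phi> t x.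
      0 < T \<longrightarrow>
      continuous_on (dom_closed T (UKbar orthant_closed)) f \<longrightarrow>
      tilted T (UKbar orthant_closed) (dual_cone UNIV (UKbar orthant_closed)) f \<longrightarrow>
      0 < t \<longrightarrow> ereal t < T \<longrightarrow>
      x \<in> UKbar orthant_closed - UK orthant_open \<longrightarrow>
      smooth_on_set (dom_open T (UKbar orthant_closed)) \<phi> \<longrightarrow>
      local_max_on (dom_open T (UKbar orthant_closed)) (\<lambda>p. f p - \<phi> p) (t, x) \<longrightarrow>
      (INF \<nu>\<in>normals UNIV (UKbar orthant_closed) x. ereal (\<nu> \<bullet> xgrad \<phi> t x)) \<le> 0)
  \<and>
   (\<forall>(T::ereal) (f :: real \<times> ((real^'d^'d)^('k::{finite,linorder})) \<Rightarrow> real) \<phi> t x.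
      0 < T \<longrightarrow>
      continuous_on (dom_closed T (UKbar psd_mats)) f \<longrightarrow>
      tilted T (UKbar psd_mats) (dual_cone sym_mats (UKbar psd_mats)) f \<longrightarrow>
      0 < t \<longrightarrow> ereal t < T \<longrightarrow>
      x \<in> UKbar psd_mats - UK pd_mats \<longrightarrow>
      smooth_on_set (dom_open T (UKbar psd_mats)) \<phi> \<longrightarrow>
      local_max_on (dom_open T (UKbar psd_mats)) (\<lambda>p. f p - \<phi> p) (t, x) \<longrightarrow>
      (INF \<nu>\<in>normals sym_mats (UKbar psd_mats) x. ereal (\<nu> \<bullet> xgrad \<phi> t x)) \<le> 0)"
proof (intro conjI allI impI)
  fix T :: ereal and f :: "real \<times> ((real^'d)^('k::{finite,linorder})) \<Rightarrow> real" and \<phi> t x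
  assume "0 < T" "continuous_on (dom_closed T (UKbar orthant_closed)) f"
    "tilted T (UKbar orthant_closed) (dual_cone UNIV (UKbar orthant_closed)) f"
    "0 < t" "ereal t < T" "x \<in> UKbar orthant_closed - UK orthant_open"
    "smooth_on_set (dom_open T (UKbar orthant_closed)) \<phi>"
    "local_max_on (dom_open T (UKbar orthant_closed)) (\<lambda>p. f p - \<phi> p) (t, x)"
  then show "(INF \<nu>\<in>normals UNIV (UKbar orthant_closed) x. ereal (\<nu> \<bullet> xgrad \<phi> t x)) \<le> 0"
    using generic[of UNIV orthant_closed orthant_open T f t x \<phi>] subspace_UNIV orth_closed orth_convex
      orth_cone orth_bd by blast
next
  fix T :: ereal and f :: "real \<times> ((real^'d^'d)^('k::{finite,linorder})) \<Rightarrow> real" and \<phi> t x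
  assume "0 < T" "continuous_on (dom_closed T (UKbar psd_mats)) f"
    "tilted T (UKbar psd_mats) (dual_cone sym_mats (UKbar psd_mats)) f"
    "0 < t" "ereal t < T" "x \<in> UKbar psd_mats - UK pd_mats"
    "smooth_on_set (dom_open T (UKbar psd_mats)) \<phi>"
    "local_max_on (dom_open T (UKbar psd_mats)) (\<lambda>p. f p - \<phi> p) (t, x)"
  then show "(INF \<nu>\<in>normals sym_mats (UKbar psd_mats) x. ereal (\<nu> \<bullet> xgrad \<phi> t x)) \<le> 0"
    using generic[of sym_mats psd_mats pd_mats T f t x \<phi>] sym_subspace sym_closed psd_sub psd_closed
      psd_convex psd_cone psd_bd by blast
qed

end
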